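(* Let $\mathbb{K}$ be a perfect field, $\mathbf{u}_1,\dots,\mathbf{u}_t\in\mathbb{K}^{\mathbb{N}^n}$ with $\mathrm{ann}(\mathbf{u}_1,\dots,\mathbf{u}_t)$ zero-dimensional, and fix $j\in\{1,\dots,n\}$. Suppose $b_1<\cdots<b_u<b_{u+1}$ are the first $u+1$ standard monomials of $\mathbb{K}[X_j,\dots,X_n]/J_j$ for the lexicographic order induced by $X_j>\cdots>X_n$, with $b_1=1$. Then for any monomial $b$ with $b_u<b<b_{u+1}$, the family $\{b_1,\dots,b_u,b\}$ is dependent.
   Context: For $m\in\mathbb{N}^n$, $\mathbf{X}^m=X_1^{m_1}\cdots X_n^{m_n}$; for a sequence $\mathbf{u}=(u_m)_m$ and $f=\sum_m f_m\mathbf{X}^m$, $\langle\mathbf{u}\mid f\rangle=\sum_mf_mu_m$, $f\cdot\mathbf{u}=(\langle\mathbf{u}\mid\mathbf{X}^mf\rangle)_m$, $\mathrm{ann}(\mathbf{u})$ is the ideal of $f$ with $f\cdot\mathbf{u}=0$, and $\mathrm{ann}$ of several sequences is the intersection. $\pi_j(\mathbf{u}_i)$ is the sequence indexed by $\mathbb{N}^{n-j+1}$ with $\langle\pi_j(\mathbf{u}_i)\mid(m_j,\dots,m_n)\rangle=\langle\mathbf{u}_i\mid(0,\dots,0,m_j,\dots,m_n)\rangle$, and $J_j=\mathrm{ann}(\pi_j(\mathbf{u}_1),\dots,\pi_j(\mathbf{u}_t))\subset\mathbb{K}[X_j,\dots,X_n]$. A family of monomials in $\mathbb{K}[X_j,\dots,X_n]$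 is dependent if its images modulo $J_j$ are $\mathbb{K}$-linearly dependent. *)

theory Defs
  imports Main "HOL-Library.Poly_Mapping"
begin

text \<open>Monomials are exponent vectors \<open>nat \<Rightarrow>\<^sub>0 nat\<close> (variable X_(i+1) has index i);
  polynomials over 'a are finitely supported maps \<open>(nat \<Rightarrow>\<^sub>0 nat) \<Rightarrow>\<^sub>0 'a\<close>.
  A sequence indexed by N^n is a map from monomials to 'a (only monomials with
  support in the relevant variable set matter).\<close>

definition perfect_field :: "'a::field itself \<Rightarrow> bool" where
  "perfect_field _ \<longleftrightarrow> CHAR('a) = 0 \<or> (\<forall>y::'a. \<exists>x. x ^ CHAR('a) = y)"

definition mons_on :: "nat set \<Rightarrow> (nat \<Rightarrow>\<^sub>0 nat) set" where
  "mons_on V = {m. Poly_Mapping.keys m \<subseteq> V}"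

definition polys_on :: "nat set \<Rightarrow> ((nat \<Rightarrow>\<^sub>0 nat) \<Rightarrow>\<^sub>0 'a::zero) set" where
  "polys_on V = {f. Poly_Mapping.keys f \<subseteq> mons_on V}"

text \<open>\<open>\<langle>u | X^m f\<rangle> = \<Sum>_k f_k u_(m+k)\<close>, i.e. the m-th term of \<open>f \<cdot> u\<close>.\<close>
definition act :: "((nat \<Rightarrow>\<^sub>0 nat) \<Rightarrow>\<^sub>0 'a::comm_ring_1) \<Rightarrow> ((nat \<Rightarrow>\<^sub>0 nat) \<Rightarrow> 'a)
    \<Rightarrow> (nat \<Rightarrow>\<^sub>0 nat) \<Rightarrow> 'a" where
  "act f u m = (\<Sum>k\<in>Poly_Mapping.keys f. Poly_Mapping.lookup f k * u (m + k))"

text \<open>Annihilator, inside K[X_i : i \<in> V], of the sequences U i (i \<in> T), each viewed as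
  a sequence indexed by the monomials in the variables V (for V = {j..<n}
  this is exactly the annihilator of the projections \<open>\<pi>_j(u_i)\<close>).\<close>
definition ann_on :: "nat set \<Rightarrow> 'i set \<Rightarrow> ('i \<Rightarrow> (nat \<Rightarrow>\<^sub>0 nat) \<Rightarrow> 'a::comm_ring_1)
    \<Rightarrow> ((nat \<Rightarrow>\<^sub>0 nat) \<Rightarrow>\<^sub>0 'a) set" where
  "ann_on V T U = {f \<in> polys_on V. \<forall>i\<in>T. \<forall>m\<in>mons_on V. act f (U i) m = 0}"

text \<open>Zero-dimensional ideal I of K[X_i : i \<in> V]: the quotient is a finite-dimensional
  K-vector space, i.e. spanned by the classes of finitely many monomials.\<close>
definition zero_dim_on :: "nat set \<Rightarrow> ((nat \<Rightarrow>\<^sub>0 nat) \<Rightarrow>\<^sub>0 'a::field) set \<Rightarrow> bool" where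
  "zero_dim_on V I \<longleftrightarrow> (\<exists>B. finite B \<and> B \<subseteq> mons_on V \<and>
     (\<forall>m\<in>mons_on V. \<exists>c. Poly_Mapping.single m 1 - (\<Sum>b\<in>B. Poly_Mapping.single b (c b)) \<in> I))"

text \<open>Lexicographic order with X_1 > X_2 > ... (smaller index = larger variable).\<close>
definition lex_less :: "(nat \<Rightarrow>\<^sub>0 nat) \<Rightarrow> (nat \<Rightarrow>\<^sub>0 nat) \<Rightarrow> bool" where
  "lex_less m m' \<longleftrightarrow> (\<exists>k. Poly_Mapping.lookup m k < Poly_Mapping.lookup m' k \<and> (\<forall>i<k. Poly_Mapping.lookup m i = Poly_Mapping.lookup m' i))"

definition lex_lm :: "((nat \<Rightarrow>\<^sub>0 nat) \<Rightarrow>\<^sub>0 'a::zero) \<Rightarrow> (nat \<Rightarrow>\<^sub>0 nat) \<Rightarrow> bool" where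
  "lex_lm f m \<longleftrightarrow> m \<in> Poly_Mapping.keys f \<and> (\<forall>k\<in>Poly_Mapping.keys f. k \<noteq> m \<longrightarrow> lex_less k m)"

definition lex_standard :: "nat set \<Rightarrow> ((nat \<Rightarrow>\<^sub>0 nat) \<Rightarrow>\<^sub>0 'a::zero) set \<Rightarrow> (nat \<Rightarrow>\<^sub>0 nat) \<Rightarrow> bool" where
  "lex_standard V I m \<longleftrightarrow> m \<in> mons_on V \<and> \<not> (\<exists>f\<in>I. lex_lm f m)"

definition dependent_mod :: "((nat \<Rightarrow>\<^sub>0 nat) \<Rightarrow>\<^sub>0 'a::field) set \<Rightarrow> (nat \<Rightarrow>\<^sub>0 nat) set \<Rightarrow> bool" where
  "dependent_mod I S \<longleftrightarrow> (\<exists>c. (\<exists>s\<in>S. c s \<noteq> 0) \<and> (\<Sum>s\<in>S. Poly_Mapping.single s (c s)) \<in> I)"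

end

theory Submission imports Defs begin

lemma act_sup:
  assumes "finite K" "Poly_Mapping.keys f \<subseteq> K"
  shows "act f u m = (\<Sum>k\<in>K. Poly_Mapping.lookup f k * u (m + k))"
  unfolding act_def
  by (rule sum.mono_neutral_left) (use assms in \<open>auto simp: in_keys_iff\<close>)

lemma lin_comb:
  fixes G :: "'k \<Rightarrow> (nat \<Rightarrow>\<^sub>0 nat) \<Rightarrow>\<^sub>0 'a::field"
  assumes K: "finite K" and G: "\<forall>k\<in>K. G k \<in> ann_on V T U"
    and p: "\<forall>x. Poly_Mapping.lookup p x = (\<Sum>k\<in>K. A k * Poly_Mapping.lookup (G k) x)"
  shows "p \<in> ann_on V T U"
proof -
  define KS where "KS = (\<Union>k\<in>K. Poly_Mapping.keys (G k))"
  have fin: "finite KS" using K by (simp add: KS_def)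
  have kp: "Poly_Mapping.keys p \<subseteq> KS"
  proof
    fix x assume "x \<in> Poly_Mapping.keys p"
    hence "(\<Sum>k\<in>K. A k * Poly_Mapping.lookup (G k) x) \<noteq> 0" using p by (simp add: in_keys_iff)
    then obtain k where "k \<in> K" "A k * Poly_Mapping.lookup (G k) x \<noteq> 0"
      by (meson sum.neutral)
    thus "x \<in> KS" by (auto simp: KS_def in_keys_iff)
  qed
  have KSm: "KS \<subseteq> mons_on V" using G by (auto simp: KS_def ann_on_def polys_on_def)
  have kG: "\<forall>k\<in>K. Poly_Mapping.keys (G k) \<subseteq> KS" by (auto simp: KS_def)
  show ?thesis unfolding ann_on_def polys_on_def
  proof (intro CollectI conjI ballI)
    show "Poly_Mapping.keys p \<subseteq> mons_on V" using kp KSm by blast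
  next
    fix i m assume i: "i \<in> T" and m: "m \<in> mons_on V"
    have "act p (U i) m = (\<Sum>x\<in>KS. (\<Sum>k\<in>K. A k * Poly_Mapping.lookup (G k) x) * U i (m + x))"
      using act_sup[OF fin kp] p by simp
    also have "\<dots> = (\<Sum>k\<in>K. A k * (\<Sum>x\<in>KS. Poly_Mapping.lookup (G k) x * U i (m + x)))"
      by (simp add: sum_distrib_left sum_distrib_right mult.assoc sum.swap[of _ KS])
    also have "\<dots> = (\<Sum>k\<in>K. A k * act (G k) (U i) m)"
      by (rule sum.cong[OF refl]) (simp add: act_sup[OF fin] kG)
    also have "\<dots> = 0" using G i m by (simp add: ann_on_def)
    finally show "act p (U i) m = 0" .
  qed
qed

lemma lex_irrefl: "\<not> lex_less m m"
  by (auto simp: lex_less_def)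

lemma lex_trans: "lex_less a b \<Longrightarrow> lex_less b c \<Longrightarrow> lex_less a c"
  unfolding lex_less_def
proof (elim exE conjE)
  fix k1 k2
  assume a: "Poly_Mapping.lookup a k1 < Poly_Mapping.lookup b k1" "\<forall>i<k1. Poly_Mapping.lookup a i = Poly_Mapping.lookup b i"
    and b: "Poly_Mapping.lookup b k2 < Poly_Mapping.lookup c k2" "\<forall>i<k2. Poly_Mapping.lookup b i = Poly_Mapping.lookup c i"
  show "\<exists>k. Poly_Mapping.lookup a k < Poly_Mapping.lookup c k \<and> (\<forall>i<k. Poly_Mapping.lookup a i = Poly_Mapping.lookup c i)"
  proof (cases "k1 < k2")
    case True thus ?thesis using a b by (intro exI[of _ k1]) auto
  next
    case False
    show ?thesis
    proof (cases "k1 = k2")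
      case True thus ?thesis using a b by (intro exI[of _ k1]) auto
    next
      case False
      hence "k2 < k1" using \<open>\<not> k1 < k2\<close> by simp
      thus ?thesis using a b by (intro exI[of _ k2]) auto
    qed
  qed
qed

lemma lex_wf:
  assumes "V \<subseteq> {0..<N}"
  shows "wf {(x,y). x \<in> mons_on V \<and> y \<in> mons_on V \<and> lex_less x y}"
proof (rule wf_subset)
  show "wf (inv_image (lex less_than) (\<lambda>m. map (Poly_Mapping.lookup m) [0..<N]))"
    by (intro wf_inv_image wf_lex wf_less_than)
next
  show "{(x,y). x \<in> mons_on V \<and> y \<in> mons_on V \<and> lex_less x y} \<subseteq> inv_image (lex less_than) (\<lambda>m. map (Poly_Mapping.lookup m) [0..<N])"
  proof (clarsimp)
    fix x y assume x: "x \<in> mons_on V" and y: "y \<in> mons_on V" and l: "lex_less x y"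
    then obtain k where k: "Poly_Mapping.lookup x k < Poly_Mapping.lookup y k"
      "\<forall>i<k. Poly_Mapping.lookup x i = Poly_Mapping.lookup y i" by (auto simp: lex_less_def)
    have "k \<in> Poly_Mapping.keys y" using k(1) by (simp add: in_keys_iff)
    hence kN: "k < N" using y assms by (auto simp: mons_on_def)
    have sp: "[0..<N] = [0..<k] @ k # [Suc k..<N]"
      using kN by (metis upt_conv_Cons upt_add_eq_append le0 add_diff_inverse_nat less_imp_le_nat not_less)
    have "map (Poly_Mapping.lookup x) [0..<k] = map (Poly_Mapping.lookup y) [0..<k]"
      using k(2) by simp
    thus "(map (Poly_Mapping.lookup x) [0..<N], map (Poly_Mapping.lookup y) [0..<N]) \<in> lex less_than"
      unfolding sp lex_conv using k(1) by (auto intro!: exI[of _ "map (Poly_Mapping.lookup x) [0..<k]"])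
  qed
qed

lemma lookup_sum_single:
  assumes "finite S"
  shows "Poly_Mapping.lookup (\<Sum>s\<in>S. Poly_Mapping.single s (c s)) x = (if x \<in> S then c x else 0)"
  using assms by (simp add: lookup_sum lookup_single when_def sum.delta)

lemma reduce:
  fixes U :: "nat \<Rightarrow> (nat \<Rightarrow>\<^sub>0 nat) \<Rightarrow> 'a::field"
  assumes V: "V \<subseteq> {0..<N}" and S: "finite S"
    and H: "\<forall>m. lex_standard V (ann_on V T U) m \<and> lex_less m tp \<longrightarrow> m \<in> S"
  shows "m \<in> mons_on V \<Longrightarrow> lex_less m tp \<Longrightarrow>
    \<exists>c. Poly_Mapping.single m 1 - (\<Sum>s\<in>S. Poly_Mapping.single s (c s)) \<in> ann_on V T U"
proof (induction m rule: wf_induct[OF lex_wf[OF V]])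
  case (1 m)
  define I where "I = ann_on V T U"
  show ?case
  proof (cases "lex_standard V I m")
    case True
    hence mS: "m \<in> S" using H 1 by (auto simp: I_def)
    have "Poly_Mapping.single m 1 - (\<Sum>s\<in>S. Poly_Mapping.single s (if s = m then 1 else 0)) \<in> I"
      unfolding I_def
      by (rule lin_comb[where K="{}"]) (simp_all add: lookup_minus lookup_sum_single[OF S] lookup_single when_def mS)
    thus ?thesis by (auto simp: I_def)
  next
    case False
    then obtain f where fI: "f \<in> I" and lm: "lex_lm f m" using 1 by (auto simp: lex_standard_def)
    define K' where "K' = Poly_Mapping.keys f - {m}"
    have mk: "m \<in> Poly_Mapping.keys f" using lm by (simp add: lex_lm_def)
    define a where "a = Poly_Mapping.lookup f m"
    have a0: "a \<noteq> 0" using mk by (simp add: a_def in_keys_iff)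
    have "\<forall>k\<in>K'. \<exists>c. Poly_Mapping.single k 1 - (\<Sum>s\<in>S. Poly_Mapping.single s (c s)) \<in> I"
    proof
      fix k assume k: "k \<in> K'"
      have lk: "lex_less k m" using lm k by (auto simp: lex_lm_def K'_def)
      have km: "k \<in> mons_on V" using fI k by (auto simp: I_def ann_on_def polys_on_def K'_def)
      show "\<exists>c. Poly_Mapping.single k 1 - (\<Sum>s\<in>S. Poly_Mapping.single s (c s)) \<in> I"
        using 1(1)[rule_format, of k] lk km 1(2,3) lex_trans[OF lk 1(3)] by (auto simp: I_def)
    qed
    then obtain C where C: "\<forall>k\<in>K'. Poly_Mapping.single k 1 - (\<Sum>s\<in>S. Poly_Mapping.single s (C k s)) \<in> I"
      by metis
    define G where "G k = (if k = m then f else Poly_Mapping.single k 1 - (\<Sum>s\<in>S. Poly_Mapping.single s (C k s)))" for k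
    define A where "A k = (if k = m then 1 / a else - Poly_Mapping.lookup f k / a)" for k
    define d where "d s = - (\<Sum>k\<in>K'. Poly_Mapping.lookup f k * C k s) / a" for s
    have finK: "finite K'" by (simp add: K'_def)
    have kf: "Poly_Mapping.keys f = insert m K'" "m \<notin> K'" using mk by (auto simp: K'_def)
    have "Poly_Mapping.single m 1 - (\<Sum>s\<in>S. Poly_Mapping.single s (d s)) \<in> I"
      unfolding I_def
    proof (rule lin_comb[where K="Poly_Mapping.keys f" and G=G and A=A])
      show "\<forall>k\<in>Poly_Mapping.keys f. G k \<in> ann_on V T U"
        using C fI by (auto simp: G_def I_def K'_def)
    next
      show "\<forall>x. Poly_Mapping.lookup (Poly_Mapping.single m 1 - (\<Sum>s\<in>S. Poly_Mapping.single s (d s))) x =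
        (\<Sum>k\<in>Poly_Mapping.keys f. A k * Poly_Mapping.lookup (G k) x)"
      proof
        fix x
        have "(\<Sum>k\<in>Poly_Mapping.keys f. A k * Poly_Mapping.lookup (G k) x)
          = Poly_Mapping.lookup f x / a + (\<Sum>k\<in>K'. - Poly_Mapping.lookup f k / a *
               ((if k = x then 1 else 0) - (if x \<in> S then C k x else 0)))"
          unfolding kf(1) using finK kf(2)
          apply (simp add: A_def G_def)
          apply (rule sum.cong[OF refl])
          apply (auto simp add: lookup_minus lookup_sum_single[OF S] lookup_single when_def)
          done
        also have "\<dots> = Poly_Mapping.lookup f x / a - (\<Sum>k\<in>K'. (if k = x then Poly_Mapping.lookup f k / a else 0))
             + (if x \<in> S then (\<Sum>k\<in>K'. Poly_Mapping.lookup f k * C k x) / a else 0)"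
        proof -
          have e: "\<And>k. - Poly_Mapping.lookup f k / a * ((if k = x then 1 else 0) - (if x \<in> S then C k x else 0))
             = (if x \<in> S then Poly_Mapping.lookup f k * C k x / a else 0) - (if k = x then Poly_Mapping.lookup f k / a else 0)"
            by (simp add: divide_simps algebra_simps)
          show ?thesis
            unfolding e sum_subtractf
            by (cases "x \<in> S") (simp_all add: sum_divide_distrib)
        qed
        also have "\<dots> = (if m = x then 1 else 0) - (if x \<in> S then d x else 0)"
        proof -
          have s1: "(\<Sum>k\<in>K'. (if k = x then Poly_Mapping.lookup f k / a else 0)) = (if x \<in> K' then Poly_Mapping.lookup f x / a else 0)"
            using finK by (simp add: sum.delta)
          have s2: "(if m = x then 1 else 0) = Poly_Mapping.lookup f x / a - (if x \<in> K' then Poly_Mapping.lookup f x / a else 0)"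
          proof (cases "x = m")
            case True thus ?thesis using kf(2) a0 by (simp add: a_def)
          next
            case False
            show ?thesis
            proof (cases "x \<in> K'")
              case True thus ?thesis using False by simp
            next
              case nK: False
              hence "x \<notin> Poly_Mapping.keys f" using False kf(1) by blast
              hence "Poly_Mapping.lookup f x = 0" by (simp add: in_keys_iff)
              thus ?thesis using False nK by simp
            qed
          qed
          show ?thesis unfolding s1 s2 by (simp add: d_def)
        qed
        finally show "Poly_Mapping.lookup (Poly_Mapping.single m 1 - (\<Sum>s\<in>S. Poly_Mapping.single s (d s))) x =
          (\<Sum>k\<in>Poly_Mapping.keys f. A k * Poly_Mapping.lookup (G k) x)"
          by (simp add: lookup_minus lookup_sum_single[OF S] lookup_single when_def)
      qed
    qed simp
    thus ?thesis by (auto simp: I_def)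
  qed
qed

theorem lemma5:
  fixes U :: "nat \<Rightarrow> (nat \<Rightarrow>\<^sub>0 nat) \<Rightarrow> 'a::field"
    and n t j u :: nat
    and bs :: "nat \<Rightarrow> (nat \<Rightarrow>\<^sub>0 nat)"
    and b :: "nat \<Rightarrow>\<^sub>0 nat"
  assumes perfect: "perfect_field TYPE('a)"
    and zd: "zero_dim_on {0..<n} (ann_on {0..<n} {1..t} U)"
    and j: "j < n"
    and u: "u \<ge> 1"
    and std: "\<forall>i\<in>{1..u+1}. lex_standard {j..<n} (ann_on {j..<n} {1..t} U) (bs i)"
    and incr: "\<forall>i\<in>{1..u}. lex_less (bs i) (bs (i+1))"
    and first: "\<forall>m. lex_standard {j..<n} (ann_on {j..<n} {1..t} U) m \<and> lex_less m (bs (u+1))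
                  \<longrightarrow> m \<in> bs ` {1..u}"
    and b1: "bs 1 = 0"
    and bmon: "b \<in> mons_on {j..<n}"
    and blow: "lex_less (bs u) b"
    and bhigh: "lex_less b (bs (u+1))"
  shows "dependent_mod (ann_on {j..<n} {1..t} U) (insert b (bs ` {1..u}))"
proof -
  define S where "S = bs ` {1..u}"
  define I where "I = ann_on {j..<n} {1..t} U"
  have S: "finite S" by (simp add: S_def)
  obtain c where c: "Poly_Mapping.single b 1 - (\<Sum>s\<in>S. Poly_Mapping.single s (c s)) \<in> I"
    using reduce[of "{j..<n}" n S "{1..t}" U "bs (u+1)" b] first bmon bhigh S
    unfolding S_def I_def by auto
  have lt: "\<forall>d. d < u \<longrightarrow> lex_less (bs (u - d)) b"
  proof
    fix d show "d < u \<longrightarrow> lex_less (bs (u - d)) b"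
    proof (induction d)
      case 0 thus ?case using blow by simp
    next
      case (Suc d)
      show ?case
      proof
        assume d: "Suc d < u"
        have "lex_less (bs (u - Suc d)) (bs (u - Suc d + 1))"
          using incr d by auto
        moreover have "u - Suc d + 1 = u - d" using d by simp
        moreover have "lex_less (bs (u - d)) b" using Suc.IH d by simp
        ultimately show "lex_less (bs (u - Suc d)) b"
          using lex_trans by metis
      qed
    qed
  qed
  have bS: "b \<notin> S"
  proof
    assume "b \<in> S"
    then obtain i where i: "i \<in> {1..u}" "b = bs i" by (auto simp: S_def)
    have "u - i < u" using i by auto
    hence "lex_less (bs (u - (u - i))) b" using lt by blast
    moreover have "u - (u - i) = i" using i by auto
    ultimately show False using i lex_irrefl by metis
  qed
  define c' where "c' s = (if s = b then 1 else - c s)" for s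
  have "(\<Sum>s\<in>insert b S. Poly_Mapping.single s (c' s)) \<in> I"
    unfolding I_def
  proof (rule lin_comb[where K="{b}" and A="\<lambda>_. 1" and G="\<lambda>_. Poly_Mapping.single b 1 - (\<Sum>s\<in>S. Poly_Mapping.single s (c s))"])
    show "\<forall>k\<in>{b}. Poly_Mapping.single b 1 - (\<Sum>s\<in>S. Poly_Mapping.single s (c s)) \<in> ann_on {j..<n} {1..t} U"
      using c by (simp add: I_def)
    show "\<forall>x. Poly_Mapping.lookup (\<Sum>s\<in>insert b S. Poly_Mapping.single s (c' s)) x =
      (\<Sum>k\<in>{b}. 1 * Poly_Mapping.lookup (Poly_Mapping.single b 1 - (\<Sum>s\<in>S. Poly_Mapping.single s (c s))) x)"
    proof
      fix x
      have fi: "finite (insert b S)" using S by simp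
      show "Poly_Mapping.lookup (\<Sum>s\<in>insert b S. Poly_Mapping.single s (c' s)) x =
        (\<Sum>k\<in>{b}. 1 * Poly_Mapping.lookup (Poly_Mapping.single b 1 - (\<Sum>s\<in>S. Poly_Mapping.single s (c s))) x)"
        unfolding lookup_sum_single[OF fi] lookup_minus lookup_sum_single[OF S]
        using bS by (cases "x = b") (simp_all add: lookup_single when_def c'_def)
    qed
  qed simp
  thus ?thesis unfolding dependent_mod_def I_def[symmetric] S_def[symmetric]
  proof (intro exI[of _ c'] conjI)
    show "\<exists>s\<in>insert b S. c' s \<noteq> 0" by (simp add: c'_def)
  qed
qed

end
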